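(* Suppose $F_i$ satisfies the Production Function Assumption (b) and $W_i$ satisfies the Labor Cost and Growth Assumptions. Then: (i) For all $\mathbf P\in\mathbb R^N_{>0}$, $P_E>0$ and $x\in\mathcal O_i$, the problem $\overline\Pi_i(\mathbf P,P_E,x):=\max_{(\mathbf q_i,E_i,L_i)\in\mathbb R^{N+2}_{\ge0}}\Pi_i(\mathbf P,\mathbf q_i,E_i,L_i,P_E,x)$ admits a solution; if $F_i$ is strictly concave and $W_i$ strictly convex, it is unique. (ii) $\overline\Pi_i(\mathbf P,P_E,x)=W_i^*\big(\widetilde\Pi_i(\mathbf P,P_E)-x\big)$. (iii) If $W_i$ is strictly convex and differentiable, optimal inputs are $L_i^*=(W_i')^{-1}(\widetilde\Pi_i(\mathbf P,P_E)-x)$, $q^*_{ij}=\tilde q^*_{ij}L_i^*$ ($j=1,\dots,N$), $E_i^*=\tilde E_i^*L_i^*$, where $(\tilde{\mathbf q}_i^*,\tilde E_i^* )$ maximizes the problem defining $\widetilde\Pi_i(\mathbf P,P_E)$.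
   Context: $\mathcal O_i\subseteq\mathbb R_{>0}$ is the state space of sector $i$. Production function $F_i:\mathbb R^{N+2}_{\ge0}\to\mathbb R_{\ge0}$, labor cost $W_i:\mathbb R_{\ge0}\to\mathbb R_{>0}$. Instantaneous profit: $\Pi_i(\mathbf P,\mathbf q_i,E_i,L_i,P_E,x)=P_iF_i(\mathbf q_i,E_i,L_i)-\sum_{j=1}^NP_jq_{ij}-P_EE_i-W_i(L_i)-xL_i$. $W_i^*(y)=\max_{L\ge0}\{Ly-W_i(L)\}$. $\widetilde\Pi_i(\mathbf P,P_E)=\max_{\tilde{\mathbf q}_i\ge0,\tilde E_i\ge0}\{P_iF_i(\tilde{\mathbf q}_i,\tilde E_i,1)-\sum_jP_j\tilde q_{ij}-P_E\tilde E_i\}$. Production Function Assumption (b): $F_i$ increasing in each argument, upper semi-continuous, concave, homogeneous of degree one, and $F_i(\mathbf q,E,L)\le c_iL$ for some $c_i<\infty$. Labor Cost Assumption: $W_i$ strictly increasing, lower semi-continuous, convex. Growth Assumption: $\lim_{L\to\infty}W_i(L)/L=+\infty$. *)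

theory Defs
  imports "HOL-Analysis.Analysis"
begin

definition usc_on :: "'a::topological_space set \<Rightarrow> ('a \<Rightarrow> real) \<Rightarrow> bool" where
  "usc_on S f \<longleftrightarrow> (\<forall>x\<in>S. \<forall>e>0. \<forall>\<^sub>F y in at x within S. f y < f x + e)"

definition lsc_on :: "'a::topological_space set \<Rightarrow> ('a \<Rightarrow> real) \<Rightarrow> bool" where
  "lsc_on S f \<longleftrightarrow> (\<forall>x\<in>S. \<forall>e>0. \<forall>\<^sub>F y in at x within S. f x - e < f y)"

definition strict_convex_on :: "'a::real_vector set \<Rightarrow> ('a \<Rightarrow> real) \<Rightarrow> bool" where
  "strict_convex_on S f \<longleftrightarrow> (\<forall>x\<in>S. \<forall>y\<in>S. x \<noteq> y \<longrightarrow>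
     (\<forall>u::real. 0 < u \<and> u < 1 \<longrightarrow>
        f ((1 - u) *\<^sub>R x + u *\<^sub>R y) < (1 - u) * f x + u * f y))"

definition strict_concave_on :: "'a::real_vector set \<Rightarrow> ('a \<Rightarrow> real) \<Rightarrow> bool" where
  "strict_concave_on S f \<longleftrightarrow> strict_convex_on S (\<lambda>x. - f x)"

text \<open>Input space R^{N+2}_{\<ge>0}: triples (q, E, L), q \<in> R^N (indexed by the finite type 'n).\<close>
definition inputs :: "((real^'n) \<times> real \<times> real) set" where
  "inputs = {(q, E, L). (\<forall>j. 0 \<le> q $ j) \<and> 0 \<le> E \<and> 0 \<le> L}"

definition profit ::
  "((real^'n) \<times> real \<times> real \<Rightarrow> real) \<Rightarrow> (real \<Rightarrow> real) \<Rightarrow> 'n \<Rightarrow>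
   real^'n \<Rightarrow> real^'n \<Rightarrow> real \<Rightarrow> real \<Rightarrow> real \<Rightarrow> real \<Rightarrow> real" where
  "profit F W i P q E L PE x =
     P $ i * F (q, E, L) - (\<Sum>j\<in>UNIV. P $ j * q $ j) - PE * E - W L - x * L"

text \<open>Optimal profit \<open>\<Pi>bar\<close> (the maximum, written as a supremum).\<close>
definition profit_bar ::
  "((real^'n) \<times> real \<times> real \<Rightarrow> real) \<Rightarrow> (real \<Rightarrow> real) \<Rightarrow> 'n \<Rightarrow>
   real^'n \<Rightarrow> real \<Rightarrow> real \<Rightarrow> real" where
  "profit_bar F W i P PE x =
     Sup ((\<lambda>(q, E, L). profit F W i P q E L PE x) ` inputs)"

definition Wstar :: "(real \<Rightarrow> real) \<Rightarrow> real \<Rightarrow> real" where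
  "Wstar W y = Sup ((\<lambda>L. L * y - W L) ` {0..})"

definition unit_profit ::
  "((real^'n) \<times> real \<times> real \<Rightarrow> real) \<Rightarrow> 'n \<Rightarrow> real^'n \<Rightarrow> real \<Rightarrow> real^'n \<Rightarrow> real \<Rightarrow> real" where
  "unit_profit F i P PE q E = P $ i * F (q, E, 1) - (\<Sum>j\<in>UNIV. P $ j * q $ j) - PE * E"

definition unit_inputs :: "((real^'n) \<times> real) set" where
  "unit_inputs = {(q, E). (\<forall>j. 0 \<le> q $ j) \<and> 0 \<le> E}"

definition profit_tilde ::
  "((real^'n) \<times> real \<times> real \<Rightarrow> real) \<Rightarrow> 'n \<Rightarrow> real^'n \<Rightarrow> real \<Rightarrow> real" where
  "profit_tilde F i P PE = Sup ((\<lambda>(q, E). unit_profit F i P PE q E) ` unit_inputs)"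

end

theory Submission
  imports Defs
begin
lemma usc_on_subset: "usc_on S f \<Longrightarrow> K \<subseteq> S \<Longrightarrow> usc_on K f"
  unfolding usc_on_def
  by (meson at_le filter_leD subsetD)

lemma usc_max:
  fixes f :: "'a::metric_space \<Rightarrow> real"
  assumes K: "compact K" "K \<noteq> {}" and u: "usc_on K f"
  shows "\<exists>z\<in>K. \<forall>y\<in>K. f y \<le> f z"
proof -
  define C where "C y = {w\<in>K. f y \<le> f w}" for y
  have clK: "closed K" using K compact_imp_closed by blast
  have clC: "closed (C y)" for y
    unfolding closed_limpt
  proof (intro allI impI)
    fix z assume lp: "z islimpt C y"
    have "C y \<subseteq> K" by (auto simp: C_def)
    then have zK: "z \<in> K" using lp clK closed_limpt islimpt_subset by blast
    show "z \<in> C y"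
    proof (rule ccontr)
      assume "z \<notin> C y"
      then have lt: "f z < f y" using zK by (auto simp: C_def)
      have H: "\<forall>e>0. \<forall>\<^sub>F w in at z within K. f w < f z + e"
        using u zK unfolding usc_on_def by auto
      have "\<forall>\<^sub>F w in at z within K. f w < f z + (f y - f z)"
        using H[rule_format, of "f y - f z"] lt by simp
      then obtain S where S: "open S" "z \<in> S" "\<And>w. w \<in> S \<Longrightarrow> w \<in> K \<Longrightarrow> w \<noteq> z \<Longrightarrow> f w < f y"
        unfolding eventually_at_topological by auto
      obtain w where "w \<in> C y" "w \<in> S" "w \<noteq> z" using lp S(1,2) unfolding islimpt_def by blast
      then have "w \<in> K" "f y \<le> f w" by (auto simp: C_def)
      then show False using S(3)[of w] \<open>w \<in> S\<close> \<open>w \<noteq> z\<close> by linarith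
    qed
  qed
  have "K \<inter> \<Inter>(C ` K) \<noteq> {}"
  proof (rule compact_imp_fip[OF K(1)])
    show "\<And>T. T \<in> C ` K \<Longrightarrow> closed T" using clC by auto
    fix F' assume F': "finite F'" "F' \<subseteq> C ` K"
    then obtain Y where Y: "Y \<subseteq> K" "finite Y" "F' = C ` Y"
      by (meson finite_subset_image)
    show "K \<inter> \<Inter>F' \<noteq> {}"
    proof (cases "Y = {}")
      case True then show ?thesis using Y K by auto
    next
      case False
      obtain y0 where y0: "y0 \<in> Y" "\<forall>y\<in>Y. f y \<le> f y0"
      proof -
        have "Max (f ` Y) \<in> f ` Y" using False Y(2) by simp
        then obtain y0 where "y0 \<in> Y" "f y0 = Max (f ` Y)" by auto
        moreover have "\<forall>y\<in>Y. f y \<le> Max (f ` Y)" using Y(2) by simp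
        ultimately show ?thesis using that by auto
      qed
      have "y0 \<in> K \<inter> \<Inter>F'" using y0 Y by (auto simp: C_def)
      then show ?thesis by blast
    qed
  qed
  then obtain z where "z \<in> K" "\<forall>y\<in>K. z \<in> C y" by blast
  then show ?thesis by (auto simp: C_def)
qed

lemma usc_comp:
  fixes F :: "'a::topological_space \<Rightarrow> real" and h :: "'b::topological_space \<Rightarrow> 'a"
  assumes u: "usc_on S F" and h: "continuous_on K h" "h ` K \<subseteq> S" and a: "0 < a"
    and g: "continuous_on K g"
  shows "usc_on K (\<lambda>y. a * F (h y) + g y)"
  unfolding usc_on_def
proof (intro ballI allI impI)
  fix z e assume z: "z \<in> K" and e: "(0::real) < e"
  have hz: "h z \<in> S" using h z by auto
  have "\<forall>\<^sub>F w in at (h z) within S. F w < F (h z) + e / (2 * a)"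
    using u hz e a unfolding usc_on_def by auto
  then have "\<forall>\<^sub>F w in nhds (h z). w \<in> S \<longrightarrow> F w < F (h z) + e / (2 * a)"
    unfolding eventually_at_filter using e a
    by (auto elim: eventually_mono)
  moreover have "(h \<longlongrightarrow> h z) (at z within K)"
    using h(1) z continuous_on_def by blast
  ultimately have e1: "\<forall>\<^sub>F y in at z within K. h y \<in> S \<longrightarrow> F (h y) < F (h z) + e / (2 * a)"
    by (rule eventually_compose_filterlim)
  have "(g \<longlongrightarrow> g z) (at z within K)"
    using g z continuous_on_def by blast
  then have e2: "\<forall>\<^sub>F y in at z within K. dist (g y) (g z) < e / 2"
    using e unfolding tendsto_iff by (meson half_gt_zero)
  have e3: "\<forall>\<^sub>F y in at z within K. y \<in> K"
    by (simp add: eventually_at_filter)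
  show "\<forall>\<^sub>F y in at z within K. a * F (h y) + g y < a * F (h z) + g z + e"
    using e1 e2 e3
  proof eventually_elim
    case (elim y)
    then have "h y \<in> S" using h by auto
    then have "F (h y) < F (h z) + e / (2 * a)" using elim by auto
    then have "a * F (h y) < a * F (h z) + e / 2"
      using a by (simp add: field_simps)
    moreover have "g y < g z + e / 2" using elim(2) by (auto simp: dist_real_def abs_if split: if_splits)
    ultimately show ?case by linarith
  qed
qed

lemma usc_neg_lsc:
  assumes l: "lsc_on S W" and K: "K \<subseteq> S" and g: "continuous_on K g"
  shows "usc_on K (\<lambda>y. g y - W y)"
  unfolding usc_on_def
proof (intro ballI allI impI)
  fix z e assume z: "z \<in> K" and e: "(0::real) < e"
  have "\<forall>\<^sub>F y in at z within S. W z - e/2 < W y"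
    using l z K e unfolding lsc_on_def by auto
  then have e1: "\<forall>\<^sub>F y in at z within K. W z - e/2 < W y"
    by (meson K at_le filter_leD)
  have "(g \<longlongrightarrow> g z) (at z within K)"
    using g z continuous_on_def by blast
  then have e2: "\<forall>\<^sub>F y in at z within K. dist (g y) (g z) < e / 2"
    using e unfolding tendsto_iff by (meson half_gt_zero)
  show "\<forall>\<^sub>F y in at z within K. g y - W y < g z - W z + e"
    using e1 e2 by eventually_elim (auto simp: dist_real_def abs_if split: if_splits)
qed

lemma tangent0:
  fixes f :: "real \<Rightarrow> real"
  assumes cv: "convex_on {0..} f" and c: "0 \<le> c" and x: "0 \<le> x"
    and d: "(f has_real_derivative d) (at c within {0..})"
  shows "d * (x - c) \<le> f x - f c"
proof (cases x c rule: linorder_cases)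
  case less
  then have "c \<in> interior {0..}" using x by auto
  moreover have "(f has_real_derivative d) (at c within {0..})" using d .
  ultimately show ?thesis
    by (intro convex_on_imp_above_tangent[OF cv]) (auto simp: is_interval_connected x)
next
  case equal then show ?thesis by simp
next
  case greater
  have lim: "((\<lambda>y. (f y - f c) / (y - c)) \<longlongrightarrow> d) (at c within {c<..})"
    using d unfolding has_field_derivative_iff
    by (rule tendsto_mono[rotated]) (intro at_le, use c in auto)
  have ev: "eventually (\<lambda>y. (f y - f c) / (y - c) \<le> (f x - f c) / (x - c)) (at c within {c<..})"
    using eventually_at_right_real[OF greater]
  proof eventually_elim
    fix y assume y: "y \<in> {c<..<x}"
    have "f y \<le> (f x - f c) / (x - c) * (y - c) + f c"
      using y c x greater
      by (intro convex_onD_Icc'[OF convex_on_subset[OF cv]]) auto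
    then have "f y - f c \<le> (f x - f c) / (x - c) * (y - c)" by linarith
    then show "(f y - f c) / (y - c) \<le> (f x - f c) / (x - c)"
      using y by (simp add: pos_divide_le_eq)
  qed
  have "d \<le> (f x - f c) / (x - c)"
    by (rule tendsto_upperbound[OF lim ev]) simp
  then show ?thesis using greater by (simp add: divide_simps mult.commute)
qed

theorem proposition4p1:
  fixes F :: "(real^'n) \<times> real \<times> real \<Rightarrow> real"
    and W :: "real \<Rightarrow> real"
    and i :: 'n
  assumes F_nonneg: "\<forall>z\<in>inputs. 0 \<le> F z"
    and F_incr_q: "\<forall>q E L j t. (q, E, L) \<in> inputs \<and> 0 \<le> t \<longrightarrow>
                      F (q, E, L) \<le> F (q + t *\<^sub>R axis j 1, E, L)"
    and F_incr_E: "\<forall>q E L t. (q, E, L) \<in> inputs \<and> 0 \<le> t \<longrightarrow> F (q, E, L) \<le> F (q, E + t, L)"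
    and F_incr_L: "\<forall>q E L t. (q, E, L) \<in> inputs \<and> 0 \<le> t \<longrightarrow> F (q, E, L) \<le> F (q, E, L + t)"
    and F_usc: "usc_on inputs F"
    and F_concave: "concave_on inputs F"
    and F_homog: "\<forall>z\<in>inputs. \<forall>t>0. F (t *\<^sub>R z) = t * F z"
    and F_bound: "\<exists>c. \<forall>q E L. (q, E, L) \<in> inputs \<longrightarrow> F (q, E, L) \<le> c * L"
    and W_pos: "\<forall>L\<ge>0. 0 < W L"
    and W_incr: "strict_mono_on {0..} W"
    and W_lsc: "lsc_on {0..} W"
    and W_convex: "convex_on {0..} W"
    and W_growth: "filterlim (\<lambda>L. W L / L) at_top at_top"
  shows
    "\<forall>P PE x. (\<forall>j. 0 < P $ j) \<and> 0 < PE \<and> 0 < x \<longrightarrow>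
       \<comment> \<open>(i) existence of a maximizer\<close>
       (\<exists>z\<in>inputs. \<forall>z'\<in>inputs.
          (case z' of (q, E, L) \<Rightarrow> profit F W i P q E L PE x)
          \<le> (case z of (q, E, L) \<Rightarrow> profit F W i P q E L PE x))
       \<comment> \<open>(i) uniqueness under strict concavity / convexity\<close>
     \<and> (strict_concave_on inputs F \<and> strict_convex_on {0..} W \<longrightarrow>
          (\<forall>z1\<in>inputs. \<forall>z2\<in>inputs.
             (\<forall>z'\<in>inputs.
                (case z' of (q, E, L) \<Rightarrow> profit F W i P q E L PE x)
                \<le> (case z1 of (q, E, L) \<Rightarrow> profit F W i P q E L PE x)) \<and>
             (\<forall>z'\<in>inputs.
                (case z' of (q, E, L) \<Rightarrow> profit F W i P q E L PE x)
                \<le> (case z2 of (q, E, L) \<Rightarrow> profit F W i P q E L PE x))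
             \<longrightarrow> z1 = z2))
       \<comment> \<open>(ii) value formula\<close>
     \<and> profit_bar F W i P PE x = Wstar W (profit_tilde F i P PE - x)
       \<comment> \<open>(iii) explicit optimal inputs\<close>
     \<and> (strict_convex_on {0..} W \<and> (\<forall>L\<ge>0. W differentiable (at L within {0..})) \<longrightarrow>
          (\<forall>qt Et Ls. (qt, Et) \<in> unit_inputs \<and>
              (\<forall>(q', E')\<in>unit_inputs. unit_profit F i P PE q' E' \<le> unit_profit F i P PE qt Et) \<and>
              0 \<le> Ls \<and> (W has_real_derivative (profit_tilde F i P PE - x)) (at Ls within {0..})
            \<longrightarrow> (Ls *\<^sub>R qt, Et * Ls, Ls) \<in> inputs \<and>
                (\<forall>(q, E, L)\<in>inputs. profit F W i P q E L PE x
                    \<le> profit F W i P (Ls *\<^sub>R qt) (Et * Ls) Ls PE x)))"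
proof (intro allI impI)
  fix P :: "real^'n" and PE x :: real
  assume pos: "(\<forall>j. 0 < P $ j) \<and> 0 < PE \<and> 0 < x"
  then have Ppos: "\<And>j. 0 < P $ j" and PEpos: "0 < PE" by auto
  let ?U = "unit_profit F i P PE"
  let ?T = "profit_tilde F i P PE"
  obtain c where c: "\<And>q E L. (q, E, L) \<in> inputs \<Longrightarrow> F (q, E, L) \<le> c * L"
    using F_bound by blast
  have sum_nonneg: "0 \<le> (\<Sum>j\<in>UNIV. P $ j * q $ j)" if "\<forall>j. 0 \<le> q $ j" for q :: "real^'n"
    using that Ppos by (intro sum_nonneg) (simp add: less_imp_le)
  have Ule: "?U q E \<le> P $ i * c - (\<Sum>j\<in>UNIV. P $ j * q $ j) - PE * E"
    if "(q, E) \<in> unit_inputs" for q E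
  proof -
    have "(q, E, 1) \<in> inputs" using that by (auto simp: inputs_def unit_inputs_def)
    then have "F (q, E, 1) \<le> c" using c[of q E 1] by simp
    then have "P $ i * F (q, E, 1) \<le> P $ i * c" using Ppos[of i] by simp
    then show ?thesis unfolding unit_profit_def by simp
  qed
  have in00: "(0, 0) \<in> unit_inputs" by (simp add: unit_inputs_def)
  have U00: "0 \<le> ?U 0 0"
  proof -
    have "(0, 0, 1) \<in> inputs" by (simp add: inputs_def)
    then have "0 \<le> F (0, 0, 1)" using F_nonneg by blast
    then show ?thesis unfolding unit_profit_def using Ppos[of i] by simp
  qed
  define B where "B = P $ i * c"
  have B0: "0 \<le> B" using Ule[OF in00] U00 by (simp add: B_def)
  define K where "K = {z :: (real^'n) \<times> real. (\<forall>j. 0 \<le> fst z $ j) \<and> 0 \<le> snd z \<and>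
      (\<Sum>j\<in>UNIV. P $ j * fst z $ j) + PE * snd z \<le> B}"
  have KU: "K \<subseteq> unit_inputs" by (auto simp: K_def unit_inputs_def)
  have zK: "(0, 0) \<in> K" using B0 by (simp add: K_def)
  have clK: "closed K"
    unfolding K_def
    by (intro closed_Collect_conj closed_Collect_all closed_Collect_le continuous_intros)
  have bK: "bounded K"
  proof (rule bounded_subset)
    show "bounded (cbox 0 (\<chi> j. B / P $ j) \<times> cbox 0 (B / PE))"
      by (intro bounded_Times bounded_cbox)
    show "K \<subseteq> cbox 0 (\<chi> j. B / P $ j) \<times> cbox 0 (B / PE)"
    proof
      fix z assume z: "z \<in> K"
      obtain q E where zq: "z = (q, E)" by (cases z) auto
      have qn: "\<forall>j. 0 \<le> q $ j" and E0: "0 \<le> E" and sB: "(\<Sum>j\<in>UNIV. P $ j * q $ j) + PE * E \<le> B"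
        using z zq by (auto simp: K_def)
      have s0: "0 \<le> (\<Sum>j\<in>UNIV. P $ j * q $ j)" using sum_nonneg qn by blast
      have "q $ j \<le> B / P $ j" for j
      proof -
        have "P $ j * q $ j \<le> (\<Sum>j\<in>UNIV. P $ j * q $ j)"
          using qn Ppos by (intro member_le_sum) (auto intro: mult_nonneg_nonneg less_imp_le)
        also have "\<dots> \<le> B" using sB mult_nonneg_nonneg[OF less_imp_le[OF PEpos] E0] by linarith
        finally show ?thesis using Ppos[of j] by (simp add: pos_le_divide_eq mult.commute)
      qed
      moreover have "E \<le> B / PE"
        using sB s0 PEpos by (simp add: pos_le_divide_eq mult.commute)
      ultimately show "z \<in> cbox 0 (\<chi> j. B / P $ j) \<times> cbox 0 (B / PE)"
        using zq qn E0 by (auto simp: mem_box_cart)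
    qed
  qed
  have cK: "compact K" using clK bK by (simp add: compact_eq_bounded_closed)
  have uK: "usc_on K (\<lambda>z. P $ i * F ((\<lambda>z. (fst z, snd z, 1::real)) z) +
       (- (\<Sum>j\<in>UNIV. P $ j * fst z $ j) - PE * snd z))"
    by (rule usc_comp[OF F_usc]) (auto simp: K_def inputs_def Ppos intro!: continuous_intros)
  then obtain z0 where z0: "z0 \<in> K" and z0m: "\<And>y. y \<in> K \<Longrightarrow>
      P $ i * F (fst y, snd y, 1) + (- (\<Sum>j\<in>UNIV. P $ j * fst y $ j) - PE * snd y) \<le>
      P $ i * F (fst z0, snd z0, 1) + (- (\<Sum>j\<in>UNIV. P $ j * fst z0 $ j) - PE * snd z0)"
    using usc_max[OF cK _ uK] zK by fastforce
  obtain q0 E0 where z0e: "z0 = (q0, E0)" by (cases z0) auto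
  have in0: "(q0, E0) \<in> unit_inputs" using z0 z0e KU by auto
  have umax: "?U q E \<le> ?U q0 E0" if "(q, E) \<in> unit_inputs" for q E
  proof (cases "(q, E) \<in> K")
    case True
    then show ?thesis using z0m[of "(q, E)"] z0e by (simp add: unit_profit_def)
  next
    case False
    then have "(\<Sum>j\<in>UNIV. P $ j * q $ j) + PE * E > B" using that
      by (auto simp: K_def unit_inputs_def)
    then have "?U q E < 0" using Ule[OF that] by (simp add: B_def)
    also have "0 \<le> ?U 0 0" by (rule U00)
    also have "?U 0 0 \<le> ?U q0 E0" using z0m[OF zK] z0e by (simp add: unit_profit_def)
    finally show ?thesis by simp
  qed
  have Tmax: "?U qt Et = ?T" if "(qt, Et) \<in> unit_inputs"
     "\<forall>(q', E')\<in>unit_inputs. ?U q' E' \<le> ?U qt Et" for qt Et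
    unfolding profit_tilde_def
    by (rule cSup_eq_maximum[symmetric]) (use that in auto)
  have T0: "?U q0 E0 = ?T" using Tmax[OF in0] umax by auto
  have UT: "?U q E \<le> ?T" if "(q, E) \<in> unit_inputs" for q E
    using umax[OF that] T0 by simp
  define g where "g L = L * (?T - x) - W L" for L
  have up: "profit F W i P q E L PE x \<le> g L" if z: "(q, E, L) \<in> inputs" for q E L
  proof (cases "L = 0")
    case True
    have "F (q, E, L) \<le> 0" using c[OF z] True by simp
    then have "P $ i * F (q, E, L) \<le> 0" using Ppos[of i] by (simp add: mult_nonneg_nonpos)
    moreover have "0 \<le> (\<Sum>j\<in>UNIV. P $ j * q $ j)" using z sum_nonneg by (auto simp: inputs_def)
    moreover have "0 \<le> PE * E" using z PEpos by (auto simp: inputs_def)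
    ultimately show ?thesis using True by (simp add: profit_def g_def)
  next
    case False
    then have Lp: "0 < L" using z by (auto simp: inputs_def)
    define q' where "q' = (1 / L) *\<^sub>R q"
    define E' where "E' = E / L"
    have in': "(q', E') \<in> unit_inputs" using z Lp
      by (auto simp: unit_inputs_def inputs_def q'_def E'_def)
    have in1: "(q', E', 1) \<in> inputs" using in' by (auto simp: unit_inputs_def inputs_def)
    have zeq: "(q, E, L) = L *\<^sub>R (q', E', 1)" using Lp by (simp add: q'_def E'_def)
    have Feq: "F (q, E, L) = L * F (q', E', 1)"
      unfolding zeq by (rule F_homog[rule_format, OF in1 Lp])
    have seq: "(\<Sum>j\<in>UNIV. P $ j * q $ j) = L * (\<Sum>j\<in>UNIV. P $ j * q' $ j)"
      using Lp by (simp add: q'_def sum_distrib_left)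
    have Eeq: "E = L * E'" using Lp by (simp add: E'_def)
    have "profit F W i P q E L PE x = L * ?U q' E' - W L - x * L"
      unfolding profit_def unit_profit_def Feq seq by (subst Eeq) (simp add: algebra_simps)
    also have "\<dots> \<le> L * ?T - W L - x * L" using UT[OF in'] Lp by simp
    finally show ?thesis by (simp add: g_def algebra_simps)
  qed
  have at: "profit F W i P (L *\<^sub>R qt) (Et * L) L PE x = g L"
    if qt: "(qt, Et) \<in> unit_inputs" "?U qt Et = ?T" and L: "0 \<le> L" for qt Et L
  proof (cases "L = 0")
    case True
    have "(0, 0, 0) \<in> inputs" by (simp add: inputs_def)
    then have "F (0, 0, 0) = 0" using c[of 0 0 0] F_nonneg by force
    then show ?thesis using True by (simp add: profit_def g_def)
  next
    case False
    then have Lp: "0 < L" using L by simp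
    have in1: "(qt, Et, 1) \<in> inputs" using qt by (auto simp: unit_inputs_def inputs_def)
    have zeq: "(L *\<^sub>R qt, Et * L, L) = L *\<^sub>R (qt, Et, 1)" by (simp add: mult.commute)
    have Feq: "F (L *\<^sub>R qt, Et * L, L) = L * F (qt, Et, 1)"
      unfolding zeq by (rule F_homog[rule_format, OF in1 Lp])
    have seq: "(\<Sum>j\<in>UNIV. P $ j * (L *\<^sub>R qt) $ j) = L * (\<Sum>j\<in>UNIV. P $ j * qt $ j)"
      by (simp add: sum_distrib_left algebra_simps)
    have "profit F W i P (L *\<^sub>R qt) (Et * L) L PE x = L * ?U qt Et - W L - x * L"
      unfolding profit_def unit_profit_def Feq seq by (simp add: algebra_simps)
    then show ?thesis using qt(2) by (simp add: g_def algebra_simps)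
  qed
  have gmax: "\<exists>Lm\<ge>0. \<forall>L\<ge>0. g L \<le> g Lm"
  proof -
    define Z where "Z = \<bar>?T - x\<bar> + W 0 + 1"
    have "\<forall>\<^sub>F L in at_top. Z \<le> W L / L"
      using W_growth by (simp add: filterlim_at_top)
    then obtain B0 where B0: "\<And>L. L \<ge> B0 \<Longrightarrow> Z \<le> W L / L"
      by (auto simp: eventually_at_top_linorder)
    define B1 where "B1 = max B0 1"
    have W00: "0 < W 0" using W_pos by simp
    have far: "g L < g 0" if "L > B1" for L
    proof -
      have L1: "1 < L" and LB: "B0 \<le> L" using that by (auto simp: B1_def)
      have "Z * L \<le> W L" using B0[OF LB] L1 by (simp add: pos_le_divide_eq)
      moreover have "L * (?T - x) \<le> L * \<bar>?T - x\<bar>" using L1 by (intro mult_left_mono) auto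
      moreover have "(W 0 + 1) * 1 \<le> (W 0 + 1) * L" using L1 W00 by (intro mult_left_mono) auto
      ultimately show ?thesis unfolding g_def Z_def by (simp add: algebra_simps)
    qed
    have uK2: "usc_on {0..B1} g"
      unfolding g_def by (rule usc_neg_lsc[OF W_lsc]) (auto intro!: continuous_intros)
    obtain Lm where Lm: "Lm \<in> {0..B1}" "\<And>L. L \<in> {0..B1} \<Longrightarrow> g L \<le> g Lm"
      using usc_max[OF compact_Icc _ uK2] B1_def by fastforce
    show ?thesis
    proof (intro exI[of _ Lm] conjI allI impI)
      show "0 \<le> Lm" using Lm by simp
      fix L :: real assume "0 \<le> L"
      show "g L \<le> g Lm"
      proof (cases "L \<le> B1")
        case True then show ?thesis using Lm \<open>0 \<le> L\<close> by simp
      next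
        case False
        then have "g L < g 0" using far by simp
        also have "g 0 \<le> g Lm" using Lm(2)[of 0] B1_def by simp
        finally show ?thesis by simp
      qed
    qed
  qed
  then obtain Lm where Lm0: "0 \<le> Lm" and Lmax: "\<And>L. 0 \<le> L \<Longrightarrow> g L \<le> g Lm" by blast
  define zs where "zs = (Lm *\<^sub>R q0, E0 * Lm, Lm)"
  have zsin: "zs \<in> inputs" using in0 Lm0 by (auto simp: zs_def inputs_def unit_inputs_def)
  have zsval: "(case zs of (q, E, L) \<Rightarrow> profit F W i P q E L PE x) = g Lm"
    using at[OF in0 T0 Lm0] by (simp add: zs_def)
  have allle: "(case z' of (q, E, L) \<Rightarrow> profit F W i P q E L PE x) \<le> g Lm" if "z' \<in> inputs" for z'
  proof -
    obtain q E L where ze: "z' = (q, E, L)" by (cases z') auto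
    have "0 \<le> L" using that ze by (auto simp: inputs_def)
    then show ?thesis using up[of q E L] that ze Lmax[of L] by simp
  qed
  have nsc: "\<not> strict_concave_on inputs F"
  proof
    assume sc: "strict_concave_on inputs F"
    have i1: "((0::real^'n), (0::real), (1::real)) \<in> inputs" by (simp add: inputs_def)
    have i2: "((0::real^'n), (0::real), (2::real)) \<in> inputs" by (simp add: inputs_def)
    have "- F ((1 - 1/2) *\<^sub>R (0, 0, 1) + (1/2) *\<^sub>R (0, 0, 2)) <
        (1 - 1/2) * - F (0, 0, 1) + (1/2) * - F ((0::real^'n), (0::real), (2::real))"
    proof -
      have ne: "((0::real^'n), (0::real), (1::real)) \<noteq> (0, 0, 2)" by simp
      have "\<forall>u. 0 < u \<and> u < 1 \<longrightarrow> - F ((1 - u) *\<^sub>R ((0::real^'n), (0::real), (1::real)) + u *\<^sub>R (0, 0, 2)) <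
        (1 - u) * - F (0, 0, 1) + u * - F ((0::real^'n), (0::real), (2::real))"
        using sc[unfolded strict_concave_on_def strict_convex_on_def, rule_format, OF i1 i2 ne] by simp
      from spec[OF this, of "1/2"] show ?thesis by (rule mp) simp
    qed
    moreover have "F ((1 - 1/2) *\<^sub>R (0, 0, 1) + (1/2) *\<^sub>R (0, 0, 2)) = (3/2) * F ((0::real^'n), (0::real), (1::real))"
    proof -
      have "(1 - 1/2) *\<^sub>R ((0::real^'n), (0::real), (1::real)) + (1/2) *\<^sub>R (0, 0, 2) = (3/2) *\<^sub>R (0, 0, 1)"
        by simp
      moreover have "F ((3/2) *\<^sub>R ((0::real^'n), (0::real), (1::real))) = (3/2) * F (0, 0, 1)"
        using F_homog[rule_format, OF i1, of "3/2"] by simp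
      ultimately show ?thesis by simp
    qed
    moreover have "F ((0::real^'n), (0::real), (2::real)) = 2 * F (0, 0, 1)"
    proof -
      have "((0::real^'n), (0::real), (2::real)) = 2 *\<^sub>R (0, 0, 1)" by simp
      moreover have "F (2 *\<^sub>R ((0::real^'n), (0::real), (1::real))) = 2 * F (0, 0, 1)"
        using F_homog[rule_format, OF i1, of "2"] by simp
      ultimately show ?thesis by simp
    qed
    ultimately show False by simp
  qed
  have pb: "profit_bar F W i P PE x = g Lm"
    unfolding profit_bar_def
  proof (rule cSup_eq_maximum)
    show "g Lm \<in> (\<lambda>(q, E, L). profit F W i P q E L PE x) ` inputs"
      by (rule image_eqI[where x=zs, OF _ zsin]) (simp only: zsval)
    show "\<And>y. y \<in> (\<lambda>(q, E, L). profit F W i P q E L PE x) ` inputs \<Longrightarrow> y \<le> g Lm"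
      using allle by auto
  qed
  have ws: "Wstar W (?T - x) = g Lm"
    unfolding Wstar_def
  proof (rule cSup_eq_maximum)
    show "g Lm \<in> (\<lambda>L. L * (?T - x) - W L) ` {0..}"
      using Lm0 by (auto simp: g_def)
    show "\<And>y. y \<in> (\<lambda>L. L * (?T - x) - W L) ` {0..} \<Longrightarrow> y \<le> g Lm"
      using Lmax by (auto simp: g_def)
  qed
  show "(\<exists>z\<in>inputs. \<forall>z'\<in>inputs.
          (case z' of (q, E, L) \<Rightarrow> profit F W i P q E L PE x)
          \<le> (case z of (q, E, L) \<Rightarrow> profit F W i P q E L PE x))
            \<and> (strict_concave_on inputs F \<and> strict_convex_on {0..} W \<longrightarrow>
          (\<forall>z1\<in>inputs. \<forall>z2\<in>inputs.
             (\<forall>z'\<in>inputs.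
                (case z' of (q, E, L) \<Rightarrow> profit F W i P q E L PE x)
                \<le> (case z1 of (q, E, L) \<Rightarrow> profit F W i P q E L PE x)) \<and>
             (\<forall>z'\<in>inputs.
                (case z' of (q, E, L) \<Rightarrow> profit F W i P q E L PE x)
                \<le> (case z2 of (q, E, L) \<Rightarrow> profit F W i P q E L PE x))
             \<longrightarrow> z1 = z2))
            \<and> profit_bar F W i P PE x = Wstar W (profit_tilde F i P PE - x)
            \<and> (strict_convex_on {0..} W \<and> (\<forall>L\<ge>0. W differentiable (at L within {0..})) \<longrightarrow>
          (\<forall>qt Et Ls. (qt, Et) \<in> unit_inputs \<and>
              (\<forall>(q', E')\<in>unit_inputs. unit_profit F i P PE q' E' \<le> unit_profit F i P PE qt Et) \<and>
              0 \<le> Ls \<and> (W has_real_derivative (profit_tilde F i P PE - x)) (at Ls within {0..})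
            \<longrightarrow> (Ls *\<^sub>R qt, Et * Ls, Ls) \<in> inputs \<and>
                (\<forall>(q, E, L)\<in>inputs. profit F W i P q E L PE x
                    \<le> profit F W i P (Ls *\<^sub>R qt) (Et * Ls) Ls PE x)))"
  proof (intro conjI)
    show "(\<exists>z\<in>inputs. \<forall>z'\<in>inputs.
          (case z' of (q, E, L) \<Rightarrow> profit F W i P q E L PE x)
          \<le> (case z of (q, E, L) \<Rightarrow> profit F W i P q E L PE x))"
    proof (rule bexI[OF _ zsin])
      show "\<forall>z'\<in>inputs. (case z' of (q, E, L) \<Rightarrow> profit F W i P q E L PE x)
          \<le> (case zs of (q, E, L) \<Rightarrow> profit F W i P q E L PE x)"
        unfolding zsval using allle by blast
    qed
    show "(strict_concave_on inputs F \<and> strict_convex_on {0..} W \<longrightarrow>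
          (\<forall>z1\<in>inputs. \<forall>z2\<in>inputs.
             (\<forall>z'\<in>inputs.
                (case z' of (q, E, L) \<Rightarrow> profit F W i P q E L PE x)
                \<le> (case z1 of (q, E, L) \<Rightarrow> profit F W i P q E L PE x)) \<and>
             (\<forall>z'\<in>inputs.
                (case z' of (q, E, L) \<Rightarrow> profit F W i P q E L PE x)
                \<le> (case z2 of (q, E, L) \<Rightarrow> profit F W i P q E L PE x))
             \<longrightarrow> z1 = z2))"
      by (simp add: nsc)
    show "profit_bar F W i P PE x = Wstar W (profit_tilde F i P PE - x)" using pb ws by simp
    show "(strict_convex_on {0..} W \<and> (\<forall>L\<ge>0. W differentiable (at L within {0..})) \<longrightarrow>
          (\<forall>qt Et Ls. (qt, Et) \<in> unit_inputs \<and>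
              (\<forall>(q', E')\<in>unit_inputs. unit_profit F i P PE q' E' \<le> unit_profit F i P PE qt Et) \<and>
              0 \<le> Ls \<and> (W has_real_derivative (profit_tilde F i P PE - x)) (at Ls within {0..})
            \<longrightarrow> (Ls *\<^sub>R qt, Et * Ls, Ls) \<in> inputs \<and>
                (\<forall>(q, E, L)\<in>inputs. profit F W i P q E L PE x
                    \<le> profit F W i P (Ls *\<^sub>R qt) (Et * Ls) Ls PE x)))"
    proof (intro impI allI)
      fix qt Et Ls
      assume "strict_convex_on {0..} W \<and> (\<forall>L\<ge>0. W differentiable (at L within {0..}))"
      assume H: "(qt, Et) \<in> unit_inputs \<and>
              (\<forall>(q', E')\<in>unit_inputs. ?U q' E' \<le> ?U qt Et) \<and>
              0 \<le> Ls \<and> (W has_real_derivative (?T - x)) (at Ls within {0..})"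
      note qt = conjunct1[OF H]
      note qmax = conjunct1[OF conjunct2[OF H]]
      note Ls = conjunct1[OF conjunct2[OF conjunct2[OF H]]]
      note d = conjunct2[OF conjunct2[OF conjunct2[OF H]]]
      have UqT: "?U qt Et = ?T" using Tmax[OF qt qmax] .
      have gLs: "g L \<le> g Ls" if "0 \<le> L" for L
        using tangent0[OF W_convex Ls that d] by (simp add: g_def algebra_simps)
      show "(Ls *\<^sub>R qt, Et * Ls, Ls) \<in> inputs \<and> (\<forall>(q, E, L)\<in>inputs. profit F W i P q E L PE x
                    \<le> profit F W i P (Ls *\<^sub>R qt) (Et * Ls) Ls PE x)"
      proof (intro conjI)
      show "(Ls *\<^sub>R qt, Et * Ls, Ls) \<in> inputs"
        using qt Ls by (auto simp: inputs_def unit_inputs_def)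
      show "\<forall>(q, E, L)\<in>inputs. profit F W i P q E L PE x
                    \<le> profit F W i P (Ls *\<^sub>R qt) (Et * Ls) Ls PE x"
      proof
        fix z :: "(real^'n) \<times> real \<times> real" assume zi: "z \<in> inputs"
        obtain q E L where ze: "z = (q, E, L)" by (cases z) auto
        have z: "(q, E, L) \<in> inputs" using zi ze by simp
        then have "0 \<le> L" by (auto simp: inputs_def)
        then have "profit F W i P q E L PE x \<le> profit F W i P (Ls *\<^sub>R qt) (Et * Ls) Ls PE x"
          using up[OF z] gLs[OF \<open>0 \<le> L\<close>] at[OF qt UqT Ls] by linarith
        then show "case z of (q, E, L) \<Rightarrow> profit F W i P q E L PE x
                    \<le> profit F W i P (Ls *\<^sub>R qt) (Et * Ls) Ls PE x" using ze by simp
      qed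
      qed
    qed
  qed
qed

end
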